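(* Let $X$ be a set and let $\mathcal{L}$ be a nest on $X$. Then $\mathcal{L}$ is interlocking if and only if, for each $L\in\mathcal{L}$, if $X-L$ is a lower set with respect to $\triangleleft_{\mathcal{L}^c}$, then $L$ is a lower set with respect to $\triangleleft_{\mathcal{L}}$.
   Context: A nest on $X$ is a family $\mathcal{L}$ of subsets of $X$ such that for all $M,N\in\mathcal{L}$, either $M\subseteq N$ or $N\subseteq M$. For a family $\mathcal{S}$ of subsets of $X$, define $x \triangleleft_{\mathcal{S}} y$ iff there exists $S\in\mathcal{S}$ with $x\in S$ and $y\notin S$. Let $\mathcal{L}^c=\{X-L : L\in\mathcal{L}\}$. A family $\mathcal{S}$ of subsets of $X$ is interlocking if for every $T\in\mathcal{S}$ with $T=\bigcap\{S : T\subseteq S,\ S\in\mathcal{S}-\{T\}\}$ one has $T=\bigcup\{S : S\subseteq T,\ S\in\mathcal{S}-\{T\}\}$. For a relation $\triangleleft$ on $X$ and $A\subseteq X$, let ${\downarrow}A=\{x\in X : \exists y\in A,\ x\triangleleft y\}$; $A$ is a lower set with respect to $\triangleleft$ if $A={\downarrow}A$. *)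

theory Defs
  imports Main
begin

definition nest :: "'a set \<Rightarrow> 'a set set \<Rightarrow> bool" where
  "nest X L \<longleftrightarrow> (\<forall>M\<in>L. M \<subseteq> X) \<and> (\<forall>M\<in>L. \<forall>N\<in>L. M \<subseteq> N \<or> N \<subseteq> M)"

definition rel_of :: "'a set set \<Rightarrow> 'a \<Rightarrow> 'a \<Rightarrow> bool" where
  "rel_of S x y \<longleftrightarrow> (\<exists>T\<in>S. x \<in> T \<and> y \<notin> T)"

definition compl_fam :: "'a set \<Rightarrow> 'a set set \<Rightarrow> 'a set set" where
  "compl_fam X L = (\<lambda>M. X - M) ` L"

text \<open>Intersection of a family of subsets of X (empty intersection = X).\<close>
definition interlocking :: "'a set \<Rightarrow> 'a set set \<Rightarrow> bool" where
  "interlocking X S \<longleftrightarrow>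
     (\<forall>T\<in>S. T = X \<inter> \<Inter>{U \<in> S - {T}. T \<subseteq> U} \<longrightarrow> T = \<Union>{U \<in> S - {T}. U \<subseteq> T})"

definition down :: "'a set \<Rightarrow> ('a \<Rightarrow> 'a \<Rightarrow> bool) \<Rightarrow> 'a set \<Rightarrow> 'a set" where
  "down X r A = {x \<in> X. \<exists>y\<in>A. r x y}"

definition lower_set :: "'a set \<Rightarrow> ('a \<Rightarrow> 'a \<Rightarrow> bool) \<Rightarrow> 'a set \<Rightarrow> bool" where
  "lower_set X r A \<longleftrightarrow> A = down X r A"

end

theory Submission
  imports Defs
begin

lemma lowL:
  assumes "nest X L" "M \<in> L"
  shows "lower_set X (rel_of L) M \<longleftrightarrow> M = \<Union>{U \<in> L - {M}. U \<subseteq> M}"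
proof
  assume h: "lower_set X (rel_of L) M"
  show "M = \<Union>{U \<in> L - {M}. U \<subseteq> M}"
  proof (rule equalityI; rule subsetI)
    fix x assume "x \<in> M"
    then have "x \<in> down X (rel_of L) M" using h unfolding lower_set_def by blast
    then obtain y T where "y \<in> M" "T \<in> L" "x \<in> T" "y \<notin> T"
      unfolding down_def rel_of_def by blast
    moreover have "T \<subseteq> M \<or> M \<subseteq> T" using assms \<open>T \<in> L\<close> unfolding nest_def by blast
    ultimately show "x \<in> \<Union>{U \<in> L - {M}. U \<subseteq> M}" by blast
  qed blast
next
  assume h: "M = \<Union>{U \<in> L - {M}. U \<subseteq> M}"
  show "lower_set X (rel_of L) M"
    unfolding lower_set_def
  proof (rule equalityI; rule subsetI)
    fix x assume x: "x \<in> M"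
    then obtain U where U: "U \<in> L" "U \<noteq> M" "U \<subseteq> M" "x \<in> U" using h by blast
    then obtain y where "y \<in> M" "y \<notin> U" by blast
    moreover have "x \<in> X" using x assms unfolding nest_def by blast
    ultimately show "x \<in> down X (rel_of L) M" using U unfolding down_def rel_of_def by blast
  next
    fix x assume "x \<in> down X (rel_of L) M"
    then obtain y T where "y \<in> M" "T \<in> L" "x \<in> T" "y \<notin> T"
      unfolding down_def rel_of_def by blast
    moreover have "T \<subseteq> M \<or> M \<subseteq> T" using assms \<open>T \<in> L\<close> unfolding nest_def by blast
    ultimately show "x \<in> M" by blast
  qed
qed

lemma lowC:
  assumes "nest X L" "M \<in> L"
  shows "lower_set X (rel_of (compl_fam X L)) (X - M) \<longleftrightarrow> M = X \<inter> \<Inter>{U \<in> L - {M}. M \<subseteq> U}"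
proof
  assume h: "lower_set X (rel_of (compl_fam X L)) (X - M)"
  have MX: "M \<subseteq> X" using assms unfolding nest_def by blast
  show "M = X \<inter> \<Inter>{U \<in> L - {M}. M \<subseteq> U}"
  proof (rule equalityI)
    show "M \<subseteq> X \<inter> \<Inter>{U \<in> L - {M}. M \<subseteq> U}" using MX by blast
  next
    show "X \<inter> \<Inter>{U \<in> L - {M}. M \<subseteq> U} \<subseteq> M"
    proof
      fix x assume x: "x \<in> X \<inter> \<Inter>{U \<in> L - {M}. M \<subseteq> U}"
      show "x \<in> M"
      proof (rule ccontr)
        assume "x \<notin> M"
        then have "x \<in> down X (rel_of (compl_fam X L)) (X - M)" using x h unfolding lower_set_def by blast
        then obtain y T where "y \<in> X - M" "T \<in> L" "x \<in> X - T" "y \<notin> X - T"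
          unfolding down_def rel_of_def compl_fam_def by blast
        moreover have "T \<subseteq> M \<or> M \<subseteq> T" using assms \<open>T \<in> L\<close> unfolding nest_def by blast
        ultimately show False using x by blast
      qed
    qed
  qed
next
  assume h: "M = X \<inter> \<Inter>{U \<in> L - {M}. M \<subseteq> U}"
  show "lower_set X (rel_of (compl_fam X L)) (X - M)"
    unfolding lower_set_def
  proof (rule equalityI; rule subsetI)
    fix x assume x: "x \<in> X - M"
    then obtain U where U: "U \<in> L" "U \<noteq> M" "M \<subseteq> U" "x \<notin> U" using h by blast
    then obtain y where "y \<in> U" "y \<notin> M" by blast
    moreover have "U \<subseteq> X" using U assms unfolding nest_def by blast
    ultimately show "x \<in> down X (rel_of (compl_fam X L)) (X - M)"
      using U x unfolding down_def rel_of_def compl_fam_def by blast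
  next
    fix x assume "x \<in> down X (rel_of (compl_fam X L)) (X - M)"
    then obtain y T where "y \<in> X - M" "T \<in> L" "x \<in> X - T" "y \<notin> X - T"
      unfolding down_def rel_of_def compl_fam_def by blast
    moreover have "T \<subseteq> M \<or> M \<subseteq> T" using assms \<open>T \<in> L\<close> unfolding nest_def by blast
    ultimately show "x \<in> X - M" by blast
  qed
qed

theorem theorem3p5:
  fixes X :: "'a set" and L :: "'a set set"
  assumes "nest X L"
  shows "interlocking X L \<longleftrightarrow>
    (\<forall>M\<in>L. lower_set X (rel_of (compl_fam X L)) (X - M) \<longrightarrow> lower_set X (rel_of L) M)"
  unfolding interlocking_def using lowL[OF assms] lowC[OF assms] by auto

end
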